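(* Let $\mathcal{A}=\{0,1\}$ and let $X$ be the simplified golden-mean tree-shift, i.e. the set of trees $t$ such that for every $x\in\Sigma^*$ the triple $(t_x,t_{x0},t_{x1})$ belongs to $\{(0,0,0),(0,1,1),(1,0,0)\}$. Then $X$ is uniformly strongly irreducible with complete prefix code $\Sigma^2$: for any two patterns $u,v$ accepted by $X$ there exists $t\in X$ with $t|_{S(u)}=u$ and $t|_{wxS(v)}=v$ for every leaf $w$ of $u$ and every $x\in\Sigma^2$.
   Context: $\Sigma=\{0,1\}$. $\Sigma^*$ is the set of finite words, $\Sigma^2$ is the set of words of length $2$, and a tree is $t:\Sigma^*\to\mathcal{A}$ with $t_x=t(x)$. A pattern $u$ is a map on a finite prefix-closed support $S(u)\subseteq\Sigma^*$. A pattern is accepted by $X$ if it occurs (at some node) in some tree of $X$. For $w\in\Sigma^*$, $t|_{wS(v)}=v$ means $t_{wy}=v_y$ for all $y\in S(v)$. A leaf of $u$ is $w\in S(u)$ with $w0,w1\notin S(u)$. *)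

theory Defs
  imports Main
begin

(* Sigma = {0,1} is encoded as bool (0 = False, 1 = True); words in Sigma^* are bool lists,
   concatenation is @. The alphabet A = {0,1} is likewise encoded as bool. *)
type_synonym word = "bool list"
type_synonym tree = "word \<Rightarrow> bool"
(* a pattern is a partial map; its support S(u) is dom u *)
type_synonym pattern = "word \<rightharpoonup> bool"

definition prefix_closed :: "word set \<Rightarrow> bool" where
  "prefix_closed S \<longleftrightarrow> (\<forall>x y. x @ y \<in> S \<longrightarrow> x \<in> S)"

definition is_pattern :: "pattern \<Rightarrow> bool" where
  "is_pattern u \<longleftrightarrow> finite (dom u) \<and> prefix_closed (dom u)"

definition occurs_at :: "tree \<Rightarrow> word \<Rightarrow> pattern \<Rightarrow> bool" where
  "occurs_at t w u \<longleftrightarrow> (\<forall>y \<in> dom u. u y = Some (t (w @ y)))"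

definition accepted :: "tree set \<Rightarrow> pattern \<Rightarrow> bool" where
  "accepted X u \<longleftrightarrow> (\<exists>t \<in> X. \<exists>w. occurs_at t w u)"

definition is_leaf :: "pattern \<Rightarrow> word \<Rightarrow> bool" where
  "is_leaf u w \<longleftrightarrow> w \<in> dom u \<and> w @ [False] \<notin> dom u \<and> w @ [True] \<notin> dom u"

definition golden_mean :: "tree set" where
  "golden_mean = {t. \<forall>x. (t x, t (x @ [False]), t (x @ [True])) \<in>
       {(False, False, False), (False, True, True), (True, False, False)}}"

end

theory Submission
  imports Defs
begin

lemma leaf_ext:
  assumes "is_leaf u w" "prefix_closed (dom u)"
  shows "w @ c # r \<notin> dom u"
proof
  assume "w @ c # r \<in> dom u"
  then have "(w @ [c]) @ r \<in> dom u" by simp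
  then have "w @ [c] \<in> dom u" using assms(2) unfolding prefix_closed_def by blast
  then show False using assms(1) unfolding is_leaf_def by (cases c) auto
qed

lemma leaf_unique:
  assumes "is_leaf u w" "is_leaf u w'" "prefix_closed (dom u)" "w @ r = w' @ r'"
  shows "w = w'"
proof -
  obtain us where "w = w' @ us \<and> us @ r = r' \<or> w @ us = w' \<and> r = us @ r'"
    using assms(4) by (auto simp: append_eq_append_conv2)
  then show ?thesis
  proof
    assume h: "w = w' @ us \<and> us @ r = r'"
    show ?thesis
    proof (cases us)
      case Nil then show ?thesis using h by simp
    next
      case (Cons c us')
      then have "w' @ c # us' \<in> dom u" using h assms(1) unfolding is_leaf_def by simp
      then show ?thesis using leaf_ext[OF assms(2,3)] by blast
    qed
  next
    assume h: "w @ us = w' \<and> r = us @ r'"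
    show ?thesis
    proof (cases us)
      case Nil then show ?thesis using h by simp
    next
      case (Cons c us')
      then have "w @ c # us' \<in> dom u" using h assms(2) unfolding is_leaf_def by auto
      then show ?thesis using leaf_ext[OF assms(1,3)] by blast
    qed
  qed
qed

lemma gm: "t \<in> golden_mean \<Longrightarrow> (t x, t (x @ [False]), t (x @ [True])) \<in>
       {(False, False, False), (False, True, True), (True, False, False)}"
  unfolding golden_mean_def by blast

theorem mainTheorem12:
  assumes "is_pattern u" and "is_pattern v"
    and "accepted golden_mean u" and "accepted golden_mean v"
  shows "\<exists>t \<in> golden_mean. occurs_at t [] u \<and>
           (\<forall>w x. is_leaf u w \<longrightarrow> length x = 2 \<longrightarrow> occurs_at t (w @ x) v)"
proof -
  have pc: "prefix_closed (dom u)" using assms(1) unfolding is_pattern_def by blast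
  obtain t1 w1 where t1: "t1 \<in> golden_mean" "occurs_at t1 w1 u"
    using assms(3) unfolding accepted_def by blast
  obtain t2 w2 where t2: "t2 \<in> golden_mean" "occurs_at t2 w2 v"
    using assms(4) unfolding accepted_def by blast
  define P where "P y \<longleftrightarrow> (\<exists>w r. is_leaf u w \<and> y = w @ r \<and> 2 \<le> length r)" for y
  define L where "L y = (SOME w. \<exists>r. is_leaf u w \<and> y = w @ r \<and> 2 \<le> length r)" for y
  define B where "B y \<longleftrightarrow> (\<exists>w b. is_leaf u w \<and> y = w @ [b])" for y
  define t where "t y = (if P y then t2 (w2 @ drop (length (L y) + 2) y)
     else if B y then False else t1 (w1 @ y))" for y
  have LA: "P (w @ r) \<and> t (w @ r) = t2 (w2 @ drop 2 r)" if "is_leaf u w" "2 \<le> length r" for w r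
  proof -
    have P: "P (w @ r)" using that unfolding P_def by blast
    have "\<exists>r'. is_leaf u (L (w @ r)) \<and> w @ r = L (w @ r) @ r' \<and> 2 \<le> length r'"
      unfolding L_def by (rule someI_ex) (use that in blast)
    then have "L (w @ r) = w" using leaf_unique[OF _ that(1) pc] by metis
    then show ?thesis using P unfolding t_def by simp
  qed
  have gold: "t \<in> golden_mean"
    unfolding golden_mean_def
  proof (intro CollectI allI)
    fix y
    show "(t y, t (y @ [False]), t (y @ [True])) \<in>
       {(False, False, False), (False, True, True), (True, False, False)}"
    proof (cases "P y")
      case True
      then obtain w r where wr: "is_leaf u w" "y = w @ r" "2 \<le> length r" unfolding P_def by blast
      have e: "t y = t2 (w2 @ drop 2 r)" using LA[OF wr(1,3)] wr(2) by simp
      have "t (y @ [c]) = t2 ((w2 @ drop 2 r) @ [c])" for c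
        using LA[OF wr(1), of "r @ [c]"] wr by simp
      then show ?thesis using e gm[OF t2(1), of "w2 @ drop 2 r"] by simp
    next
      case nP: False
      show ?thesis
      proof (cases "B y")
        case True
        then obtain w b where wb: "is_leaf u w" "y = w @ [b]" unfolding B_def by blast
        have e: "t y = False" using nP True unfolding t_def by simp
        have "t (y @ [c]) = t2 (w2)" for c
          using LA[OF wb(1), of "[b,c]"] wb by simp
        then show ?thesis using e by (cases "t2 w2") auto
      next
        case nB: False
        have e: "t y = t1 (w1 @ y)" using nP nB unfolding t_def by simp
        have nPc: "\<not> P (y @ [c])" for c
        proof
          assume "P (y @ [c])"
          then obtain w r where wr: "is_leaf u w" "y @ [c] = w @ r" "2 \<le> length r" unfolding P_def by blast
          have rne: "r \<noteq> []" using wr(3) by auto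
          define r' where "r' = butlast r"
          have rr: "r = r' @ [last r]" using rne unfolding r'_def by simp
          have "y @ [c] = (w @ r') @ [last r]" using wr(2) rr by (metis append_assoc)
          then have "y = w @ r'" "c = last r" by simp_all
          then have r': "r = r' @ [c]" "y = w @ r'" using rr by simp_all
          show False
          proof (cases "2 \<le> length r'")
            case True then show False using nP wr(1) r' unfolding P_def by blast
          next
            case False
            then have "length r' = 1" using wr(3) r' by simp
            then obtain b where "r' = [b]" by (cases r') auto
            then show False using nB wr(1) r' unfolding B_def by blast
          qed
        qed
        show ?thesis
        proof (cases "is_leaf u y")
          case True
          have "B (y @ [c])" for c using True unfolding B_def by blast
          then have "t (y @ [c]) = False" for c using nPc unfolding t_def by simp
          then show ?thesis by (cases "t y") auto
        next
          case nl: False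
          have "\<not> B (y @ [c])" for c using nl unfolding B_def by auto
          then have "t (y @ [c]) = t1 ((w1 @ y) @ [c])" for c using nPc unfolding t_def by simp
          then show ?thesis using e gm[OF t1(1), of "w1 @ y"] by simp
        qed
      qed
    qed
  qed
  have occ_u: "occurs_at t [] u"
    unfolding occurs_at_def
  proof
    fix y assume y: "y \<in> dom u"
    have "\<not> P y"
    proof
      assume "P y"
      then obtain w r where wr: "is_leaf u w" "y = w @ r" "2 \<le> length r" unfolding P_def by blast
      then obtain c r' where "r = c # r'" by (cases r) auto
      then show False using leaf_ext[OF wr(1) pc] y wr(2) by simp
    qed
    moreover have "\<not> B y"
    proof
      assume "B y"
      then show False using leaf_ext[OF _ pc] y unfolding B_def by blast
    qed
    ultimately have "t y = t1 (w1 @ y)" unfolding t_def by simp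
    then show "u y = Some (t ([] @ y))" using t1(2) y unfolding occurs_at_def by simp
  qed
  have occ_v: "occurs_at t (w @ x) v" if "is_leaf u w" "length x = 2" for w x
    unfolding occurs_at_def
  proof
    fix y assume y: "y \<in> dom v"
    have "t ((w @ x) @ y) = t2 (w2 @ y)" using LA[OF that(1), of "x @ y"] that(2) by simp
    then show "v y = Some (t ((w @ x) @ y))" using t2(2) y unfolding occurs_at_def by simp
  qed
  show ?thesis using gold occ_u occ_v by blast
qed

end
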